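(* Let $\mathbb{L}\in\{\mathbb{R},\mathbb{C}\}$, $n\ge1$, $c>0$, and let $\mathbf{P}^{(k)}\in\mathbb{L}^{n\times k}$ have independent columns, each uniformly distributed on the unit sphere of $\mathbb{L}^n$. Then $D_k:=\mathrm{E}\left[\det\left(\mathbf{I}_k+c\,\mathbf{P}^{(k)\dagger}\mathbf{P}^{(k)}\right)\right]$ satisfies: $D_1=1+c$; $D_2=(1+c)^2-c^2\frac{1}{n}$; $D_3=(1+c)^3-c^2(1+c)\frac{3}{n}+c^3\frac{2}{n^2}$; $D_4=(1+c)^4-c^2(1+c)^2\frac{6}{n}+c^3(1+c)\frac{8}{n^2}-c^4\left(\frac{6}{n^3}-\frac{3}{n^2}\right)$; $D_5=(1+c)^5-c^2(1+c)^3\frac{10}{n}+c^3(1+c)^2\frac{20}{n^2}-c^4(1+c)\left(\frac{30}{n^3}-\frac{15}{n^2}\right)+c^5\left(\frac{24}{n^4}-\frac{20}{n^3}\right)$.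
   Context: $\mathbf{P}^{\dagger}$ denotes the conjugate transpose (transpose if $\mathbb{L}=\mathbb{R}$). *)

theory Defs
  imports "HOL-Analysis.Analysis"
begin

text \<open>Uniform (normalized rotation-invariant surface) probability measure on the unit
  sphere of a Euclidean space: the image of the uniform distribution on the unit ball
  under radial projection x / |x| (the cone-measure construction).\<close>
definition sphere_unif :: "'a::euclidean_space measure" where
  "sphere_unif = distr (uniform_measure lborel (ball 0 1)) borel (\<lambda>x. x /\<^sub>R norm x)"

text \<open>Columns P i (i :: 'k) are independent, each uniform on the unit sphere:
  product measure.  Gram matrix G = P^dagger P has entries ip (P i) (P j).\<close>
definition exp_det ::
  "('v::euclidean_space \<Rightarrow> 'v \<Rightarrow> 'f::{real_normed_field,banach,second_countable_topology})
     \<Rightarrow> real \<Rightarrow> 'k::finite itself \<Rightarrow> 'f" where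
  "exp_det ip c _ =
     (\<integral>P. det (\<chi> (i::'k) (j::'k). (if i = j then 1 else 0) + of_real c * ip (P i) (P j))
        \<partial>(PiM (UNIV :: 'k set) (\<lambda>_. sphere_unif)))"

definition D_real :: "real \<Rightarrow> 'n::finite itself \<Rightarrow> 'k::finite itself \<Rightarrow> real" where
  "D_real c _ K = exp_det (\<lambda>(x::real^'n) y. x \<bullet> y) c K"

definition D_complex :: "real \<Rightarrow> 'n::finite itself \<Rightarrow> 'k::finite itself \<Rightarrow> complex" where
  "D_complex c _ K = exp_det (\<lambda>(x::complex^'n) y. \<Sum>l\<in>UNIV. cnj (x $ l) * y $ l) c K"

end

theory Submission
  imports Defs "HOL-Probability.Probability"
begin


lemma ball_pos: "emeasure lborel (ball (0::'a::euclidean_space) 1) \<noteq> 0"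
proof -
  have "0 < measure lborel (ball (0::'a) 1)" using content_ball_pos[of 1 "0::'a"] by simp
  then show ?thesis using emeasure_lborel_ball_finite[of "0::'a" 1]
    by (simp add: emeasure_eq_ennreal_measure)
qed

lemma ball_fin: "emeasure lborel (ball (0::'a::euclidean_space) 1) \<noteq> \<infinity>"
  using emeasure_lborel_ball_finite[of "0::'a" 1] by simp

lemma prob_U: "prob_space (uniform_measure lborel (ball (0::'a::euclidean_space) 1))"
  by (rule prob_space_uniform_measure[OF ball_pos ball_fin])

lemma meas_nrm[measurable]: "(\<lambda>x::'a::euclidean_space. x /\<^sub>R norm x) \<in> borel_measurable borel"
  by measurable

lemma sets_sphere: "sets (sphere_unif::'a::euclidean_space measure) = sets borel"
  by (simp add: sphere_unif_def)

lemma prob_sphere: "prob_space (sphere_unif::'a::euclidean_space measure)"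
proof -
  have "sets (uniform_measure lborel (ball (0::'a) 1)) = sets borel" by simp
  from measurable_cong_sets[OF this refl] meas_nrm
  have "(\<lambda>x::'a. x /\<^sub>R norm x) \<in> borel_measurable (uniform_measure lborel (ball (0::'a) 1))" by simp
  then show ?thesis unfolding sphere_unif_def by (rule prob_space.prob_space_distr[OF prob_U])
qed

lemma AE_sphere: "AE x in (sphere_unif::'a::euclidean_space measure). norm x = 1"
proof -
  have "AE x in uniform_measure lborel (ball (0::'a) 1). norm (x /\<^sub>R norm x) = 1"
    using AE_lborel_singleton[of "0::'a"] ball_pos ball_fin
    by (subst AE_uniform_measure) (auto simp: less_top elim!: eventually_mono)
  moreover have ss: "sets (uniform_measure lborel (ball (0::'a) 1)) = sets borel" by simp
  have m: "(\<lambda>x::'a. x /\<^sub>R norm x) \<in> uniform_measure lborel (ball (0::'a) 1) \<rightarrow>\<^sub>M borel"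
    using measurable_cong_sets[OF ss refl] meas_nrm by simp
  have c: "{x \<in> space borel. norm (x::'a) = 1} \<in> sets borel" by measurable
  ultimately show ?thesis unfolding sphere_unif_def
    using AE_distr_iff[OF m c] by simp
qed



definition refl_map :: "'a::euclidean_space \<Rightarrow> 'a \<Rightarrow> 'a" where
  "refl_map e x = x - (2 * (x \<bullet> e)) *\<^sub>R e"

definition swp :: "'a::euclidean_space \<Rightarrow> 'a \<Rightarrow> 'a \<Rightarrow> 'a" where
  "swp e f b = (if b = e then f else if b = f then e else b)"

definition swap_map :: "'a::euclidean_space \<Rightarrow> 'a \<Rightarrow> 'a \<Rightarrow> 'a" where
  "swap_map e f x = x - (x \<bullet> e) *\<^sub>R e - (x \<bullet> f) *\<^sub>R f + (x \<bullet> f) *\<^sub>R e + (x \<bullet> e) *\<^sub>R f"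

lemma refl_map_meas[measurable]: "refl_map e \<in> borel_measurable borel"
  unfolding refl_map_def by measurable

lemma swap_map_meas[measurable]: "swap_map e f \<in> borel_measurable borel"
  unfolding swap_map_def by measurable

lemma refl_map_inner: "e \<in> Basis \<Longrightarrow> b \<in> Basis \<Longrightarrow> refl_map e x \<bullet> b = (if b = e then - (x \<bullet> b) else x \<bullet> b)"
  by (auto simp: refl_map_def inner_diff_left inner_Basis)

lemma swap_map_inner: "e \<in> Basis \<Longrightarrow> f \<in> Basis \<Longrightarrow> e \<noteq> f \<Longrightarrow> b \<in> Basis \<Longrightarrow>
   swap_map e f x \<bullet> b = x \<bullet> swp e f b"
  by (auto simp: swap_map_def swp_def inner_diff_left inner_add_left inner_Basis)

lemma swp_Basis: "e \<in> Basis \<Longrightarrow> f \<in> Basis \<Longrightarrow> b \<in> Basis \<Longrightarrow> swp e f b \<in> Basis"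
  by (auto simp: swp_def)

lemma swp_swp: "e \<noteq> f \<Longrightarrow> swp e f (swp e f b) = b"
  by (auto simp: swp_def)

lemma swp_bij: "e \<in> Basis \<Longrightarrow> f \<in> Basis \<Longrightarrow> e \<noteq> f \<Longrightarrow> bij_betw (swp e f) Basis Basis"
  by (rule bij_betw_byWitness[where f'="swp e f"]) (auto simp: swp_swp swp_Basis)

lemma refl_map_lborel: assumes "e \<in> Basis" shows "distr lborel borel (refl_map e) = lborel"
proof -
  define c where "c j = (if j = e then -1 else (1::real))" for j :: 'a
  have T: "(\<lambda>x. 0 + (\<Sum>j\<in>Basis. (c j * (x \<bullet> j)) *\<^sub>R j)) = refl_map e"
  proof
    fix x :: 'a
    have "(\<Sum>j\<in>Basis. (c j * (x \<bullet> j)) *\<^sub>R j) = (\<Sum>j\<in>Basis. (x \<bullet> j) *\<^sub>R j - (if j = e then (2 * (x \<bullet> j)) *\<^sub>R j else 0))"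
      by (rule sum.cong) (auto simp: c_def scaleR_left_diff_distrib[symmetric])
    also have "\<dots> = x - (2 * (x \<bullet> e)) *\<^sub>R e"
    proof -
      have two: "(2 * (x \<bullet> e)) *\<^sub>R e = (x \<bullet> e) *\<^sub>R e + (x \<bullet> e) *\<^sub>R e"
        by (simp only: scaleR_scaleR[symmetric] scaleR_2)
      show ?thesis using assms by (simp add: sum_subtractf euclidean_representation two)
    qed
    finally show "0 + (\<Sum>j\<in>Basis. (c j * (x \<bullet> j)) *\<^sub>R j) = refl_map e x" by (simp add: refl_map_def)
  qed
  have "lborel = density (distr lborel borel (refl_map e)) (\<lambda>_. (\<Prod>j\<in>Basis. \<bar>c j\<bar>))"
    using lborel_affine_euclidean[of c 0] T by (simp add: c_def)
  also have "(\<Prod>j\<in>Basis. \<bar>c j\<bar>) = 1" by (rule prod.neutral) (simp add: c_def)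
  finally show ?thesis by (simp add: density_1)
qed

lemma swap_map_lborel: assumes "e \<in> Basis" "f \<in> Basis" "e \<noteq> f"
  shows "distr lborel borel (swap_map e f) = lborel"
proof (rule lborel_eqI[symmetric])
  fix l u :: 'a assume le: "\<And>b. b \<in> Basis \<Longrightarrow> l \<bullet> b \<le> u \<bullet> b"
  have pre: "swap_map e f -` box l u = box (swap_map e f l) (swap_map e f u)"
  proof -
    have "x \<in> swap_map e f -` box l u \<longleftrightarrow> x \<in> box (swap_map e f l) (swap_map e f u)" for x
    proof -
      have "x \<in> swap_map e f -` box l u \<longleftrightarrow> (\<forall>b\<in>Basis. l \<bullet> b < x \<bullet> swp e f b \<and> x \<bullet> swp e f b < u \<bullet> b)"
        using assms by (simp add: mem_box swap_map_inner)
      also have "\<dots> \<longleftrightarrow> (\<forall>b\<in>Basis. l \<bullet> swp e f b < x \<bullet> b \<and> x \<bullet> b < u \<bullet> swp e f b)"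
        using assms by (metis swp_Basis swp_swp)
      also have "\<dots> \<longleftrightarrow> x \<in> box (swap_map e f l) (swap_map e f u)"
        using assms by (simp add: mem_box swap_map_inner)
      finally show ?thesis .
    qed
    then show ?thesis by blast
  qed
  have le2: "\<forall>b\<in>Basis. swap_map e f l \<bullet> b \<le> swap_map e f u \<bullet> b"
    using assms le by (simp add: swap_map_inner swp_Basis)
  have "emeasure (distr lborel borel (swap_map e f)) (box l u) = emeasure lborel (box (swap_map e f l) (swap_map e f u))"
    by (simp add: emeasure_distr pre)
  also have "\<dots> = (\<Prod>b\<in>Basis. (u - l) \<bullet> swp e f b)"
    using le2 assms by (simp add: emeasure_lborel_box_eq inner_diff_left swap_map_inner)
  also have "(\<Prod>b\<in>Basis. (u - l) \<bullet> swp e f b) = (\<Prod>b\<in>Basis. (u - l) \<bullet> b)"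
    using prod.reindex_bij_betw[OF swp_bij[OF assms], of "\<lambda>b. (u - l) \<bullet> b"] by simp
  finally show "emeasure (distr lborel borel (swap_map e f)) (box l u) = (\<Prod>b\<in>Basis. (u - l) \<bullet> b)" .
qed simp

lemma refl_map_norm: "e \<in> Basis \<Longrightarrow> norm (refl_map e x) = norm x"
  by (simp add: norm_eq_sqrt_inner refl_map_def inner_diff_left inner_diff_right algebra_simps inner_commute)

lemma swap_map_norm: assumes "e \<in> Basis" "f \<in> Basis" "e \<noteq> f" shows "norm (swap_map e f x) = norm x"
proof -
  have "swap_map e f x \<bullet> swap_map e f x = (\<Sum>b\<in>Basis. (x \<bullet> swp e f b) * (x \<bullet> swp e f b))"
    by (subst euclidean_inner) (intro sum.cong refl, simp add: assms swap_map_inner)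
  also have "\<dots> = (\<Sum>b\<in>Basis. (x \<bullet> b) * (x \<bullet> b))"
    using sum.reindex_bij_betw[OF swp_bij[OF assms], of "\<lambda>b. (x \<bullet> b) * (x \<bullet> b)"] by simp
  also have "\<dots> = x \<bullet> x" by (rule euclidean_inner[symmetric])
  finally show ?thesis by (simp add: norm_eq_sqrt_inner)
qed

lemma refl_map_scale: "refl_map e (a *\<^sub>R x) = a *\<^sub>R refl_map e x"
  by (simp add: refl_map_def algebra_simps)

lemma swap_map_scale: "swap_map e f (a *\<^sub>R x) = a *\<^sub>R swap_map e f x"
  by (simp add: swap_map_def algebra_simps)



lemma meas_sphere_iff: "(f \<in> sphere_unif \<rightarrow>\<^sub>M N) = (f \<in> (borel::'a::euclidean_space measure) \<rightarrow>\<^sub>M N)"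
  by (metis measurable_cong_sets sets_sphere)

lemma U_inv:
  fixes T :: "'a::euclidean_space \<Rightarrow> 'a"
  assumes Tm: "T \<in> borel_measurable borel" and Tl: "distr lborel borel T = lborel"
    and Tn: "\<And>x. norm (T x) = norm x"
  shows "distr (uniform_measure lborel (ball 0 1)) borel T = uniform_measure lborel (ball 0 1)"
proof (rule measure_eqI)
  show "sets (distr (uniform_measure lborel (ball 0 1)) borel T) = sets (uniform_measure lborel (ball (0::'a) 1))"
    by simp
  fix A assume A: "A \<in> sets (distr (uniform_measure lborel (ball 0 1)) borel T)"
  then have Ab: "A \<in> sets borel" by simp
  have TmU: "T \<in> uniform_measure lborel (ball 0 1) \<rightarrow>\<^sub>M borel"
    using measurable_cong_sets[of "uniform_measure lborel (ball (0::'a) 1)" borel borel borel] Tm by simp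
  have pre: "T -` A \<in> sets borel" using Tm Ab by (metis measurable_sets space_borel vimage_Int Int_UNIV_right)
  have eq: "ball 0 1 \<inter> T -` A = T -` (ball 0 1 \<inter> A)" using Tn by auto
  have "emeasure lborel (T -` (ball 0 1 \<inter> A)) = emeasure (distr lborel borel T) (ball 0 1 \<inter> A)"
    using Tm Ab by (subst emeasure_distr) auto
  also have "\<dots> = emeasure lborel (ball 0 1 \<inter> A)" by (simp add: Tl)
  finally have e: "emeasure lborel (T -` (ball 0 1 \<inter> A)) = emeasure lborel (ball 0 1 \<inter> A)" .
  show "emeasure (distr (uniform_measure lborel (ball 0 1)) borel T) A = emeasure (uniform_measure lborel (ball (0::'a) 1)) A"
  proof -
    have "emeasure (distr (uniform_measure lborel (ball 0 1)) borel T) A =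
        emeasure (uniform_measure lborel (ball 0 1)) (T -` A \<inter> space (uniform_measure lborel (ball (0::'a) 1)))"
      by (rule emeasure_distr[OF TmU Ab])
    also have "\<dots> = emeasure (uniform_measure lborel (ball 0 1)) (T -` A)" by simp
    also have "\<dots> = emeasure lborel (ball 0 1 \<inter> T -` A) / emeasure lborel (ball (0::'a) 1)"
      by (rule emeasure_uniform_measure) (use pre in auto)
    also have "\<dots> = emeasure lborel (ball 0 1 \<inter> A) / emeasure lborel (ball (0::'a) 1)"
      by (simp only: eq e)
    also have "\<dots> = emeasure (uniform_measure lborel (ball (0::'a) 1)) A"
      by (rule emeasure_uniform_measure[symmetric]) (use Ab in auto)
    finally show ?thesis .
  qed
qed

lemma sphere_inv:
  fixes T :: "'a::euclidean_space \<Rightarrow> 'a"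
  assumes Tm: "T \<in> borel_measurable borel" and Tl: "distr lborel borel T = lborel"
    and Tn: "\<And>x. norm (T x) = norm x" and Ts: "\<And>a x. T (a *\<^sub>R x) = a *\<^sub>R T x"
  shows "distr sphere_unif borel T = (sphere_unif :: 'a measure)"
proof -
  let ?U = "uniform_measure lborel (ball (0::'a) 1)"
  let ?N = "\<lambda>x::'a. x /\<^sub>R norm x"
  have ss: "sets ?U = sets borel" by simp
  have NU: "?N \<in> ?U \<rightarrow>\<^sub>M borel" using measurable_cong_sets[OF ss refl] meas_nrm by simp
  have TU: "T \<in> ?U \<rightarrow>\<^sub>M borel" using measurable_cong_sets[OF ss refl] Tm by simp
  have comm: "T \<circ> ?N = ?N \<circ> T" by (auto simp: Ts Tn)
  have "distr sphere_unif borel T = distr ?U borel (T \<circ> ?N)"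
    unfolding sphere_unif_def by (rule distr_distr[OF Tm NU])
  also have "\<dots> = distr ?U borel (?N \<circ> T)" by (simp only: comm)
  also have "\<dots> = distr (distr ?U borel T) borel ?N" by (rule distr_distr[OF meas_nrm TU, symmetric])
  also have "\<dots> = sphere_unif" unfolding sphere_unif_def U_inv[OF Tm Tl Tn] ..
  finally show ?thesis .
qed

lemma sphere_integral_inv:
  fixes T :: "'a::euclidean_space \<Rightarrow> 'a" and h :: "'a \<Rightarrow> real"
  assumes Tm: "T \<in> borel_measurable borel" and Tl: "distr lborel borel T = lborel"
    and Tn: "\<And>x. norm (T x) = norm x" and Ts: "\<And>a x. T (a *\<^sub>R x) = a *\<^sub>R T x"
    and hm: "h \<in> borel_measurable borel"
  shows "(\<integral>x. h (T x) \<partial>sphere_unif) = (\<integral>x. h x \<partial>sphere_unif)"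
proof -
  have TS: "T \<in> sphere_unif \<rightarrow>\<^sub>M borel" using Tm by (simp add: meas_sphere_iff)
  have "(\<integral>x. h (T x) \<partial>sphere_unif) = (\<integral>x. h x \<partial>distr sphere_unif borel T)"
    by (rule integral_distr[OF TS hm, symmetric])
  also have "\<dots> = (\<integral>x. h x \<partial>sphere_unif)" by (simp only: sphere_inv[OF Tm Tl Tn Ts])
  finally show ?thesis .
qed

lemma sphere_int_bounded:
  fixes h :: "'a::euclidean_space \<Rightarrow> 'b::{banach,second_countable_topology}"
  assumes hm: "h \<in> borel_measurable borel" and hb: "\<And>x. norm x = 1 \<Longrightarrow> norm (h x) \<le> B"
  shows "integrable sphere_unif h"
proof -
  interpret prob_space "sphere_unif :: 'a measure" by (rule prob_sphere)
  have hS: "h \<in> borel_measurable sphere_unif" using hm by (simp add: meas_sphere_iff)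
  show ?thesis
    by (rule integrable_const_bound[where B=B]) (use AE_sphere hb hS in \<open>auto elim!: eventually_mono\<close>)
qed

lemma moment_basis:
  fixes e f :: "'a::euclidean_space"
  assumes e: "e \<in> Basis" and f: "f \<in> Basis"
  shows "(\<integral>x. (x \<bullet> e) * (x \<bullet> f) \<partial>(sphere_unif :: 'a measure)) = (if e = f then 1 / DIM('a) else 0)"
proof -
  interpret prob_space "sphere_unif :: 'a measure" by (rule prob_sphere)
  have intg: "integrable sphere_unif (\<lambda>x::'a. (x \<bullet> a) * (x \<bullet> b))" if "a \<in> Basis" "b \<in> Basis" for a b
  proof (rule sphere_int_bounded[where B=1])
    fix x :: 'a assume "norm x = 1"
    then show "norm ((x \<bullet> a) * (x \<bullet> b)) \<le> 1"
      using Basis_le_norm[OF that(1), of x] Basis_le_norm[OF that(2), of x]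
      by (simp add: abs_mult mult_le_one)
  qed simp
  show ?thesis
  proof (cases "e = f")
    case False
    have "(\<integral>x. (x \<bullet> e) * (x \<bullet> f) \<partial>(sphere_unif :: 'a measure)) =
          (\<integral>x. (refl_map e x \<bullet> e) * (refl_map e x \<bullet> f) \<partial>(sphere_unif :: 'a measure))"
      by (rule sphere_integral_inv[where h="\<lambda>x. (x \<bullet> e) * (x \<bullet> f)", symmetric])
         (auto simp: refl_map_lborel e refl_map_norm refl_map_scale)
    also have "\<dots> = - (\<integral>x. (x \<bullet> e) * (x \<bullet> f) \<partial>(sphere_unif :: 'a measure))"
      using e f False by (simp add: refl_map_inner)
    finally show ?thesis using False by simp
  next
    case True
    define m where "m b = (\<integral>x. (x \<bullet> b) * (x \<bullet> b) \<partial>(sphere_unif :: 'a measure))" for b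
    have meq: "m b = m e" if b: "b \<in> Basis" for b
    proof (cases "b = e")
      case False
      have "m e = (\<integral>x. (swap_map e b x \<bullet> e) * (swap_map e b x \<bullet> e) \<partial>(sphere_unif :: 'a measure))"
        unfolding m_def
        by (rule sphere_integral_inv[where h="\<lambda>x. (x \<bullet> e) * (x \<bullet> e)", symmetric])
           (use False e b in \<open>auto simp: swap_map_lborel swap_map_norm swap_map_scale\<close>)
      also have "\<dots> = m b" unfolding m_def
        using e b False by (simp add: swap_map_inner swp_def)
      finally show ?thesis by simp
    qed simp
    have "(\<Sum>b\<in>Basis. m b) = (\<integral>x. (\<Sum>b\<in>(Basis::'a set). (x \<bullet> b) * (x \<bullet> b)) \<partial>(sphere_unif :: 'a measure))"
      unfolding m_def by (simp add: intg)
    also have "\<dots> = (\<integral>x. 1 \<partial>(sphere_unif :: 'a measure))"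
    proof (rule integral_cong_AE)
      show "AE x in sphere_unif. (\<Sum>b\<in>(Basis::'a set). (x \<bullet> b) * (x \<bullet> b)) = 1"
        using AE_sphere by (auto elim!: eventually_mono simp: euclidean_inner[symmetric] power2_norm_eq_inner[symmetric])
    qed (auto simp: meas_sphere_iff)
    also have "\<dots> = 1" by (simp add: prob_space)
    finally have "(\<Sum>b\<in>Basis. m b) = 1" .
    then have "real DIM('a) * m e = 1" using meq by simp
    then show ?thesis using True by (simp add: m_def field_simps)
  qed
qed



definition Am :: "('v \<Rightarrow> 'v \<Rightarrow> 'f::real_normed_field) \<Rightarrow> real \<Rightarrow> ('k \<Rightarrow> 'v) \<Rightarrow> 'k \<Rightarrow> 'k \<Rightarrow> 'f" where
  "Am ip c P i j = (if i = j then 1 else 0) + of_real c * ip (P i) (P j)"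

definition Ld :: "('v \<Rightarrow> 'v \<Rightarrow> 'f::real_normed_field) \<Rightarrow> real \<Rightarrow> 'k set \<Rightarrow> ('k \<Rightarrow> 'v) \<Rightarrow> 'f" where
  "Ld ip c K P = (\<Sum>p\<in>{p. p permutes K}. of_int (sign p) * (\<Prod>i\<in>K. Am ip c P i (p i)))"

lemma sign_tr_comp:
  assumes q: "q permutes K" and K: "finite K" and ab: "a \<noteq> b"
  shows "sign (Transposition.transpose a b \<circ> q) = - sign q"
proof -
  have "permutation q" using q K permutation_permutes by blast
  then show ?thesis using sign_compose[OF permutation_swap_id, of q a b] ab by (simp add: sign_swap_id)
qed

lemma prod_tr_comp:
  assumes q: "q permutes K" and K: "finite K" and a: "a \<notin> K" and b: "b \<in> K"
  shows "(\<Prod>i\<in>insert a K. g i ((Transposition.transpose a b \<circ> q) i)) = g a b * g (inv q b) a * (\<Prod>i\<in>K-{inv q b}. g i (q i))"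
proof -
  define j where "j = inv q b"
  have j: "j \<in> K" unfolding j_def using permutes_in_image[OF permutes_inv[OF q]] b by simp
  have qj: "q j = b" unfolding j_def using permutes_inverses[OF q] by simp
  have qa: "q a = a" using permutes_not_in[OF q a] .
  have "(\<Prod>i\<in>insert a K. g i ((Transposition.transpose a b \<circ> q) i)) = g a b * (\<Prod>i\<in>K. g i ((Transposition.transpose a b \<circ> q) i))"
    using K a qa by (simp add: prod.insert)
  also have "(\<Prod>i\<in>K. g i ((Transposition.transpose a b \<circ> q) i)) = g j a * (\<Prod>i\<in>K-{j}. g i ((Transposition.transpose a b \<circ> q) i))"
    using K j qj by (simp add: prod.remove)
  also have "(\<Prod>i\<in>K-{j}. g i ((Transposition.transpose a b \<circ> q) i)) = (\<Prod>i\<in>K-{j}. g i (q i))"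
  proof (rule prod.cong[OF refl])
    fix i assume i: "i \<in> K - {j}"
    have "q i \<noteq> b" using i qj permutes_inj[OF q] by (auto dest: injD)
    moreover have "q i \<noteq> a" using i a permutes_in_image[OF q, of i] by auto
    ultimately show "g i ((Transposition.transpose a b \<circ> q) i) = g i (q i)" by (simp add: Transposition.transpose_def)
  qed
  finally show ?thesis by (simp add: j_def mult.assoc)
qed

lemma Ld_insert:
  assumes K: "finite K" and a: "a \<notin> K"
  shows "Ld ip c (insert a K) P = Am ip c P a a * Ld ip c K P -
    (\<Sum>q\<in>{q. q permutes K}. \<Sum>j\<in>K. of_int (sign q) * (Am ip c P a (q j) * Am ip c P j a) *
        (\<Prod>i\<in>K-{j}. Am ip c P i (q i)))"
proof -
  let ?A = "Am ip c P"
  let ?f = "\<lambda>p. of_int (sign p) * (\<Prod>i\<in>insert a K. ?A i (p i))"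
  have "Ld ip c (insert a K) P = (\<Sum>b\<in>insert a K. \<Sum>q\<in>{p. p permutes K}. ?f (Transposition.transpose a b \<circ> q))"
    unfolding Ld_def by (rule sum_over_permutations_insert[OF K a])
  also have "\<dots> = (\<Sum>q\<in>{p. p permutes K}. ?f q) + (\<Sum>b\<in>K. \<Sum>q\<in>{p. p permutes K}. ?f (Transposition.transpose a b \<circ> q))"
    using K a by (simp add: sum.insert)
  also have "(\<Sum>q\<in>{p. p permutes K}. ?f q) = ?A a a * Ld ip c K P"
    unfolding Ld_def sum_distrib_left
  proof (rule sum.cong[OF refl])
    fix q assume "q \<in> {p. p permutes K}"
    then have q: "q permutes K" by simp
    show "?f q = ?A a a * (of_int (sign q) * (\<Prod>i\<in>K. ?A i (q i)))"
      using K a permutes_not_in[OF q a] by (simp add: prod.insert mult_ac)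
  qed
  also have "(\<Sum>b\<in>K. \<Sum>q\<in>{p. p permutes K}. ?f (Transposition.transpose a b \<circ> q)) =
      (\<Sum>b\<in>K. \<Sum>q\<in>{p. p permutes K}. - (of_int (sign q) * (?A a b * ?A (inv q b) a) * (\<Prod>i\<in>K-{inv q b}. ?A i (q i))))"
  proof (intro sum.cong refl)
    fix b q assume b: "b \<in> K" and "q \<in> {p. p permutes K}"
    then have q: "q permutes K" by simp
    have ab: "a \<noteq> b" using a b by auto
    show "?f (Transposition.transpose a b \<circ> q) = - (of_int (sign q) * (?A a b * ?A (inv q b) a) * (\<Prod>i\<in>K-{inv q b}. ?A i (q i)))"
      using sign_tr_comp[OF q K ab] prod_tr_comp[OF q K a b, of ?A] by (simp add: mult_ac)
  qed
  also have "\<dots> = - (\<Sum>q\<in>{p. p permutes K}. \<Sum>b\<in>K. of_int (sign q) * (?A a b * ?A (inv q b) a) * (\<Prod>i\<in>K-{inv q b}. ?A i (q i)))"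
    by (simp add: sum_negf sum.swap[of _ K])
  also have "(\<Sum>q\<in>{p. p permutes K}. \<Sum>b\<in>K. of_int (sign q) * (?A a b * ?A (inv q b) a) * (\<Prod>i\<in>K-{inv q b}. ?A i (q i))) =
     (\<Sum>q\<in>{p. p permutes K}. \<Sum>j\<in>K. of_int (sign q) * (?A a (q j) * ?A j a) * (\<Prod>i\<in>K-{j}. ?A i (q i)))"
  proof (rule sum.cong[OF refl])
    fix q assume "q \<in> {p. p permutes K}"
    then have q: "q permutes K" by simp
    have "(\<Sum>j\<in>K. of_int (sign q) * (?A a (q j) * ?A j a) * (\<Prod>i\<in>K-{j}. ?A i (q i))) =
       (\<Sum>j\<in>K. (\<lambda>b. of_int (sign q) * (?A a b * ?A (inv q b) a) * (\<Prod>i\<in>K-{inv q b}. ?A i (q i))) (q j))"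
      using permutes_inverses[OF q] by simp
    also have "\<dots> = (\<Sum>b\<in>K. of_int (sign q) * (?A a b * ?A (inv q b) a) * (\<Prod>i\<in>K-{inv q b}. ?A i (q i)))"
      by (rule sum.reindex_bij_betw[OF permutes_imp_bij[OF q]])
    finally show "(\<Sum>b\<in>K. of_int (sign q) * (?A a b * ?A (inv q b) a) * (\<Prod>i\<in>K-{inv q b}. ?A i (q i))) =
       (\<Sum>j\<in>K. of_int (sign q) * (?A a (q j) * ?A j a) * (\<Prod>i\<in>K-{j}. ?A i (q i)))" by simp
  qed
  finally show ?thesis by simp
qed

lemma permutes_fix_eq:
  assumes j: "j \<in> K"
  shows "{q. q permutes K \<and> q j = j} = {q. q permutes K - {j}}"
proof -
  have "q permutes K - {j}" if "q permutes K" "q j = j" for q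
    using that unfolding permutes_def by (metis Diff_iff singletonD)
  moreover have "q permutes K \<and> q j = j" if "q permutes K - {j}" for q
    using that permutes_subset[OF that, of K] permutes_not_in[OF that, of j] by auto
  ultimately show ?thesis by blast
qed

lemma Ld_contract:
  assumes K: "finite K"
  shows "(\<Sum>q\<in>{q. q permutes K}. \<Sum>j\<in>K. of_int (sign q) * (of_real c * ip (P j) (P (q j))) *
        (\<Prod>i\<in>K-{j}. Am ip c P i (q i))) = of_nat (card K) * Ld ip c K P - (\<Sum>j\<in>K. Ld ip c (K - {j}) P)"
proof -
  let ?A = "Am ip c P"
  let ?Q = "{q. q permutes K}"
  have fin: "finite ?Q" using finite_permutations[OF K] by simp
  have split: "of_int (sign q) * (of_real c * ip (P j) (P (q j))) * (\<Prod>i\<in>K-{j}. ?A i (q i)) =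
      of_int (sign q) * (\<Prod>i\<in>K. ?A i (q i)) - (if q j = j then of_int (sign q) * (\<Prod>i\<in>K-{j}. ?A i (q i)) else 0)"
    if "j \<in> K" for q j
  proof -
    have "(\<Prod>i\<in>K. ?A i (q i)) = ?A j (q j) * (\<Prod>i\<in>K-{j}. ?A i (q i))"
      using K that by (simp add: prod.remove)
    then show ?thesis by (auto simp: Am_def algebra_simps)
  qed
  have "(\<Sum>q\<in>?Q. \<Sum>j\<in>K. of_int (sign q) * (of_real c * ip (P j) (P (q j))) * (\<Prod>i\<in>K-{j}. ?A i (q i))) =
     (\<Sum>q\<in>?Q. \<Sum>j\<in>K. of_int (sign q) * (\<Prod>i\<in>K. ?A i (q i))) -
     (\<Sum>q\<in>?Q. \<Sum>j\<in>K. (if q j = j then of_int (sign q) * (\<Prod>i\<in>K-{j}. ?A i (q i)) else 0))"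
    by (simp add: split sum_subtractf cong: sum.cong)
  also have "(\<Sum>q\<in>?Q. \<Sum>j\<in>K. of_int (sign q) * (\<Prod>i\<in>K. ?A i (q i))) = of_nat (card K) * Ld ip c K P"
    by (simp add: Ld_def sum_distrib_left)
  also have "(\<Sum>q\<in>?Q. \<Sum>j\<in>K. (if q j = j then of_int (sign q) * (\<Prod>i\<in>K-{j}. ?A i (q i)) else 0)) =
     (\<Sum>j\<in>K. \<Sum>q\<in>?Q. (if q j = j then of_int (sign q) * (\<Prod>i\<in>K-{j}. ?A i (q i)) else 0))"
    by (rule sum.swap)
  also have "\<dots> = (\<Sum>j\<in>K. Ld ip c (K - {j}) P)"
  proof (rule sum.cong[OF refl])
    fix j assume j: "j \<in> K"
    have "(\<Sum>q\<in>?Q. (if q j = j then of_int (sign q) * (\<Prod>i\<in>K-{j}. ?A i (q i)) else 0)) =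
        (\<Sum>q\<in>{q \<in> ?Q. q j = j}. of_int (sign q) * (\<Prod>i\<in>K-{j}. ?A i (q i)))"
      by (rule sum.inter_filter[symmetric, OF fin])
    also have "{q \<in> ?Q. q j = j} = {q. q permutes K - {j}}" using permutes_fix_eq[OF j] by auto
    finally show "(\<Sum>q\<in>?Q. (if q j = j then of_int (sign q) * (\<Prod>i\<in>K-{j}. ?A i (q i)) else 0)) = Ld ip c (K - {j}) P"
      by (simp add: Ld_def)
  qed
  finally show ?thesis .
qed



fun dd :: "real \<Rightarrow> real \<Rightarrow> nat \<Rightarrow> real" where
  "dd n c 0 = 1"
| "dd n c (Suc 0) = 1 + c"
| "dd n c (Suc (Suc m)) = (1 + c - c * real (Suc m) / n) * dd n c (Suc m) + c / n * real (Suc m) * dd n c m"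

lemma dd_step: "dd n c (Suc m) = (1 + c) * dd n c m - c / n * (real m * dd n c m - real m * dd n c (m - 1))"
  by (cases m) (simp_all add: algebra_simps add_divide_distrib)

locale sph =
  fixes S :: "'v measure" and ip :: "'v \<Rightarrow> 'v \<Rightarrow> 'f::{real_normed_field,banach,second_countable_topology}"
    and good :: "'v \<Rightarrow> bool" and n :: real and c :: real
  assumes probS: "prob_space S"
    and AEgood: "AE x in S. good x"
    and ipone: "\<And>x. good x \<Longrightarrow> ip x x = 1"
    and ipbnd: "\<And>x y. good x \<Longrightarrow> good y \<Longrightarrow> norm (ip x y) \<le> 1"
    and ipmeas: "(\<lambda>(x, y). ip x y) \<in> borel_measurable (S \<Otimes>\<^sub>M S)"
    and momint: "\<And>u w. integrable S (\<lambda>x. ip u x * ip x w)"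
    and mom: "\<And>u w. (\<integral>x. ip u x * ip x w \<partial>S) = ip u w / of_real n"
    and npos: "n > 0"
begin

lemma probPM: "prob_space (PiM J (\<lambda>_. S))"
  by (rule prob_space_PiM) (simp add: probS)

sublocale PS: product_sigma_finite "\<lambda>_. S"
  unfolding product_sigma_finite_def using prob_space_imp_sigma_finite[OF probS] by simp

lemma ipm: "f \<in> M \<rightarrow>\<^sub>M S \<Longrightarrow> g \<in> M \<rightarrow>\<^sub>M S \<Longrightarrow> (\<lambda>x. ip (f x) (g x)) \<in> borel_measurable M"
  using measurable_compose[OF measurable_Pair[of f M S g S] ipmeas] by simp

lemma Am_meas: "i \<in> J \<Longrightarrow> j \<in> J \<Longrightarrow> (\<lambda>P. Am ip c P i j) \<in> borel_measurable (PiM J (\<lambda>_. S))"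
  unfolding Am_def
  by (intro borel_measurable_add borel_measurable_const borel_measurable_times ipm
        measurable_component_singleton)

lemma Ld_meas: "K \<subseteq> J \<Longrightarrow> (\<lambda>P. Ld ip c K P) \<in> borel_measurable (PiM J (\<lambda>_. S))"
  unfolding Ld_def
  by (intro borel_measurable_sum borel_measurable_times borel_measurable_const borel_measurable_prod Am_meas)
     (auto simp: permutes_in_image)

lemma Am_bound: "good (P i) \<Longrightarrow> good (P j) \<Longrightarrow> norm (Am ip c P i j) \<le> 1 + \<bar>c\<bar>"
proof -
  assume g: "good (P i)" "good (P j)"
  have "norm (Am ip c P i j) \<le> norm (if i = j then 1 else (0::'f)) + norm (of_real c * ip (P i) (P j))"
    unfolding Am_def by (rule norm_triangle_ineq)
  also have "\<dots> \<le> 1 + \<bar>c\<bar> * 1"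
    using ipbnd[OF g] by (intro add_mono) (auto simp: norm_mult mult_left_le)
  finally show ?thesis by simp
qed

lemma Ld_bound:
  assumes K: "finite K" and g: "\<forall>i\<in>K. good (P i)"
  shows "norm (Ld ip c K P) \<le> real (card {p. p permutes K}) * (1 + \<bar>c\<bar>) ^ card K"
proof -
  have "norm (Ld ip c K P) \<le> (\<Sum>p\<in>{p. p permutes K}. norm (of_int (sign p) * (\<Prod>i\<in>K. Am ip c P i (p i)) :: 'f))"
    unfolding Ld_def by (rule norm_sum)
  also have "\<dots> \<le> (\<Sum>p\<in>{p. p permutes K}. (1 + \<bar>c\<bar>) ^ card K)"
  proof (rule sum_mono)
    fix p assume "p \<in> {p. p permutes K}"
    then have p: "p permutes K" by simp
    have "norm (of_int (sign p) * (\<Prod>i\<in>K. Am ip c P i (p i)) :: 'f) = (\<Prod>i\<in>K. norm (Am ip c P i (p i)))"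
      by (simp add: norm_mult prod_norm sign_def)
    also have "\<dots> \<le> (\<Prod>i\<in>K. 1 + \<bar>c\<bar>)"
      by (intro prod_mono conjI norm_ge_zero Am_bound) (use g p permutes_in_image[OF p] in auto)
    finally show "norm (of_int (sign p) * (\<Prod>i\<in>K. Am ip c P i (p i)) :: 'f) \<le> (1 + \<bar>c\<bar>) ^ card K" by simp
  qed
  also have "\<dots> = real (card {p. p permutes K}) * (1 + \<bar>c\<bar>) ^ card K" by simp
  finally show ?thesis .
qed

lemma AE_goodPM: "finite J \<Longrightarrow> AE P in PiM J (\<lambda>_. S). \<forall>i\<in>J. good (P i)"
  by (rule eventually_ball_finite) (auto intro!: AE_PiM_component probS AEgood)

lemma Ld_int: assumes J: "finite J" and KJ: "K \<subseteq> J" shows "integrable (PiM J (\<lambda>_. S)) (Ld ip c K)"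
proof -
  interpret prob_space "PiM J (\<lambda>_. S)" by (rule probPM)
  have K: "finite K" using finite_subset[OF KJ J] .
  show ?thesis
    by (rule integrable_const_bound[where B="real (card {p. p permutes K}) * (1 + \<bar>c\<bar>) ^ card K"])
       (use AE_goodPM[OF J] Ld_bound[OF K] KJ Ld_meas[OF KJ] in \<open>auto elim!: eventually_mono\<close>)
qed

lemma Ld_cong: "(\<And>i. i \<in> K \<Longrightarrow> P i = Q i) \<Longrightarrow> Ld ip c K P = Ld ip c K Q"
  unfolding Ld_def Am_def
  by (intro sum.cong refl arg_cong2[where f="(*)"] prod.cong) (auto simp: permutes_in_image)

lemma measS[simp]: "measure S (space S) = 1"
  using prob_space.prob_space[OF probS] by simp

lemma int_const: "(\<integral>y. (a::'f) \<partial>S) = a"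
  by simp

lemma int_marg:
  assumes K: "finite K" and j: "j \<notin> K"
  shows "integral\<^sup>L (PiM (insert j K) (\<lambda>_. S)) (Ld ip c K) = integral\<^sup>L (PiM K (\<lambda>_. S)) (Ld ip c K)"
proof -
  have "integral\<^sup>L (PiM (insert j K) (\<lambda>_. S)) (Ld ip c K) = (\<integral>x. (\<integral>y. Ld ip c K (x(j:=y)) \<partial>S) \<partial>PiM K (\<lambda>_. S))"
    by (rule PS.product_integral_insert[OF K j Ld_int]) (use K in auto)
  also have "\<dots> = (\<integral>x. Ld ip c K x \<partial>PiM K (\<lambda>_. S))"
  proof (rule Bochner_Integration.integral_cong[OF refl])
    fix x
    have "Ld ip c K (x(j:=y)) = Ld ip c K x" for y by (rule Ld_cong) (use j in auto)
    then show "(\<integral>y. Ld ip c K (x(j:=y)) \<partial>S) = Ld ip c K x" by (simp add: int_const)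
  qed
  finally show ?thesis .
qed

end



context sph begin

lemma inner_int:
  assumes K: "finite K'" and a: "a \<notin> K'"
  shows "(\<integral>y. Ld ip c (insert a K') (P(a:=y)) \<partial>S) =
     (1 + of_real c) * Ld ip c K' P - of_real c / of_real n * (of_nat (card K') * Ld ip c K' P - (\<Sum>j\<in>K'. Ld ip c (K' - {j}) P))"
proof -
  let ?Q = "{q. q permutes K'}"
  define R where "R q j = (\<Prod>i\<in>K'-{j}. Am ip c P i (q i))" for q j
  define L where "L = Ld ip c K' P"
  define X where "X q j = of_int (sign q) * of_real c * of_real c * R q j" for q j
  have nz: "(of_real n :: 'f) \<noteq> 0" using npos by simp
  have eq: "Ld ip c (insert a K') (P(a:=y)) = L + (of_real c * L) * ip y y -
      (\<Sum>q\<in>?Q. \<Sum>j\<in>K'. X q j * (ip (P j) y * ip y (P (q j))))" for y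
  proof -
    have 1: "Ld ip c K' (P(a:=y)) = L" unfolding L_def by (rule Ld_cong) (use a in auto)
    have 2: "Am ip c (P(a:=y)) a a = 1 + of_real c * ip y y" by (simp add: Am_def)
    have 3: "of_int (sign q) * (Am ip c (P(a:=y)) a (q j) * Am ip c (P(a:=y)) j a) *
          (\<Prod>i\<in>K'-{j}. Am ip c (P(a:=y)) i (q i)) = X q j * (ip (P j) y * ip y (P (q j)))"
      if q: "q \<in> ?Q" and j: "j \<in> K'" for q j
    proof -
      have qp: "q permutes K'" using q by simp
      have qj: "q j \<in> K'" using permutes_in_image[OF qp] j by simp
      have "(\<Prod>i\<in>K'-{j}. Am ip c (P(a:=y)) i (q i)) = R q j"
        unfolding R_def
      proof (rule prod.cong[OF refl])
        fix i assume i: "i \<in> K' - {j}"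
        then have "q i \<in> K'" using permutes_in_image[OF qp] by simp
        then show "Am ip c (P(a:=y)) i (q i) = Am ip c P i (q i)" using i a by (auto simp: Am_def)
      qed
      moreover have "Am ip c (P(a:=y)) a (q j) = of_real c * ip y (P (q j))"
        using qj a by (auto simp: Am_def)
      moreover have "Am ip c (P(a:=y)) j a = of_real c * ip (P j) y"
        using j a by (auto simp: Am_def)
      ultimately show ?thesis by (simp add: X_def mult_ac)
    qed
    have S3: "(\<Sum>q\<in>?Q. \<Sum>j\<in>K'. of_int (sign q) * (Am ip c (P(a:=y)) a (q j) * Am ip c (P(a:=y)) j a) *
          (\<Prod>i\<in>K'-{j}. Am ip c (P(a:=y)) i (q i))) = (\<Sum>q\<in>?Q. \<Sum>j\<in>K'. X q j * (ip (P j) y * ip y (P (q j))))"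
      by (intro sum.cong refl 3)
    show ?thesis
      unfolding Ld_insert[OF K a, of ip c "P(a:=y)"] 1 2 S3
      by (simp add: algebra_simps)
  qed
  have mS: "(\<lambda>x. x) \<in> S \<rightarrow>\<^sub>M S" by simp
  have i1: "integrable S (\<lambda>y. ip y y)"
  proof -
    interpret prob_space S by (rule probS)
    show ?thesis
      by (rule integrable_const_bound[where B=1])
         (use AEgood ipbnd ipm[OF mS mS] in \<open>auto elim!: eventually_mono\<close>)
  qed
  have iy: "(\<integral>y. ip y y \<partial>S) = 1"
  proof -
    have "(\<integral>y. ip y y \<partial>S) = (\<integral>y. 1 \<partial>S)"
      by (rule integral_cong_AE) (use AEgood ipone ipm[OF mS mS] in \<open>auto elim!: eventually_mono\<close>)
    then show ?thesis by simp
  qed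
  have "(\<integral>y. Ld ip c (insert a K') (P(a:=y)) \<partial>S) =
     (\<integral>y. L + (of_real c * L) * ip y y - (\<Sum>q\<in>?Q. \<Sum>j\<in>K'. X q j * (ip (P j) y * ip y (P (q j)))) \<partial>S)"
    by (simp only: eq)
  also have "\<dots> = L + (of_real c * L) * 1 - (\<Sum>q\<in>?Q. \<Sum>j\<in>K'. X q j * (ip (P j) (P (q j)) / of_real n))"
  proof -
    interpret prob_space S by (rule probS)
    have int2: "integrable S (\<lambda>y. \<Sum>q\<in>?Q. \<Sum>j\<in>K'. X q j * (ip (P j) y * ip y (P (q j))))"
      by (simp add: momint)
    have int1: "integrable S (\<lambda>y. L + (of_real c * L) * ip y y)"
      using i1 by simp
    have "(\<integral>y. L + (of_real c * L) * ip y y - (\<Sum>q\<in>?Q. \<Sum>j\<in>K'. X q j * (ip (P j) y * ip y (P (q j)))) \<partial>S)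
       = (\<integral>y. L + (of_real c * L) * ip y y \<partial>S) - (\<integral>y. (\<Sum>q\<in>?Q. \<Sum>j\<in>K'. X q j * (ip (P j) y * ip y (P (q j)))) \<partial>S)"
      by (rule Bochner_Integration.integral_diff[OF int1 int2])
    also have "(\<integral>y. L + (of_real c * L) * ip y y \<partial>S) = L + (of_real c * L) * 1"
      by (subst Bochner_Integration.integral_add) (use i1 iy in auto)
    also have "(\<integral>y. (\<Sum>q\<in>?Q. \<Sum>j\<in>K'. X q j * (ip (P j) y * ip y (P (q j)))) \<partial>S) =
        (\<Sum>q\<in>?Q. \<Sum>j\<in>K'. X q j * (\<integral>y. ip (P j) y * ip y (P (q j)) \<partial>S))"
      by (simp add: momint)
    finally show ?thesis by (simp add: mom)
  qed
  also have "(\<Sum>q\<in>?Q. \<Sum>j\<in>K'. X q j * (ip (P j) (P (q j)) / of_real n)) =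
      of_real c / of_real n * (\<Sum>q\<in>?Q. \<Sum>j\<in>K'. of_int (sign q) * (of_real c * ip (P j) (P (q j))) * R q j)"
    unfolding sum_distrib_left by (intro sum.cong refl) (simp add: X_def field_simps nz)
  also have "(\<Sum>q\<in>?Q. \<Sum>j\<in>K'. of_int (sign q) * (of_real c * ip (P j) (P (q j))) * R q j) =
       of_nat (card K') * L - (\<Sum>j\<in>K'. Ld ip c (K' - {j}) P)"
    unfolding R_def L_def by (rule Ld_contract[OF K])
  finally have fin: "(\<integral>y. Ld ip c (insert a K') (P(a:=y)) \<partial>S) = L + (of_real c * L) * 1 -
     of_real c / of_real n * (of_nat (card K') * L - (\<Sum>j\<in>K'. Ld ip c (K' - {j}) P))" .
  show ?thesis unfolding fin L_def by (simp add: algebra_simps)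
qed

lemma main:
  assumes "finite K"
  shows "integral\<^sup>L (PiM K (\<lambda>_. S)) (Ld ip c K) = of_real (dd n c (card K))"
  using assms
proof (induction "card K" arbitrary: K rule: less_induct)
  case less
  show ?case
  proof (cases "K = {}")
    case True
    have "Ld ip c K P = 1" for P using True by (simp add: Ld_def)
    then have "Ld ip c K = (\<lambda>_. 1)" by (rule ext)
    moreover have "measure (PiM K (\<lambda>_. S)) (space (PiM K (\<lambda>_. S))) = 1"
      by (rule prob_space.prob_space[OF probPM])
    ultimately show ?thesis using True by simp
  next
    case False
    then obtain a where a: "a \<in> K" by auto
    define K' where "K' = K - {a}"
    have KK: "K = insert a K'" "a \<notin> K'" "finite K'" using a less.prems by (auto simp: K'_def)
    define m where "m = card K'"
    have cK: "card K = Suc m" using KK by (simp add: m_def)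
    have IH1: "integral\<^sup>L (PiM K' (\<lambda>_. S)) (Ld ip c K') = of_real (dd n c m)"
      using less.hyps[of K'] KK cK m_def by simp
    have IH2: "integral\<^sup>L (PiM K' (\<lambda>_. S)) (Ld ip c (K' - {j})) = of_real (dd n c (m - 1))" if j: "j \<in> K'" for j
    proof -
      have ins: "insert j (K' - {j}) = K'" using j by auto
      have "integral\<^sup>L (PiM K' (\<lambda>_. S)) (Ld ip c (K' - {j})) = integral\<^sup>L (PiM (K' - {j}) (\<lambda>_. S)) (Ld ip c (K' - {j}))"
        using int_marg[of "K' - {j}" j] KK ins by simp
      also have "\<dots> = of_real (dd n c (card (K' - {j})))"
        using less.hyps[of "K' - {j}"] KK cK j by (simp add: card_Diff1_less)
      also have "card (K' - {j}) = m - 1" using j KK by (simp add: m_def)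
      finally show ?thesis .
    qed
    have "integral\<^sup>L (PiM K (\<lambda>_. S)) (Ld ip c K) =
        (\<integral>P. (\<integral>y. Ld ip c (insert a K') (P(a:=y)) \<partial>S) \<partial>PiM K' (\<lambda>_. S))"
      unfolding KK(1) by (rule PS.product_integral_insert[OF KK(3) KK(2) Ld_int]) (use KK in auto)
    also have "\<dots> = (\<integral>P. (1 + of_real c) * Ld ip c K' P - of_real c / of_real n *
        (of_nat m * Ld ip c K' P - (\<Sum>j\<in>K'. Ld ip c (K' - {j}) P)) \<partial>PiM K' (\<lambda>_. S))"
      by (simp only: inner_int[OF KK(3) KK(2)] m_def)
    also have "\<dots> = (1 + of_real c) * of_real (dd n c m) - of_real c / of_real n *
        (of_nat m * of_real (dd n c m) - (\<Sum>j\<in>K'. of_real (dd n c (m - 1))))"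
      using Ld_int[OF KK(3)] IH1 IH2 by (simp add: Diff_subset)
    also have "\<dots> = of_real (dd n c (Suc m))"
      by (simp add: dd_step m_def)
    finally show ?thesis using cK by simp
  qed
qed

end



lemma exp_det_Ld: "exp_det ip c (TYPE('k::finite)) = (\<integral>P. Ld ip c (UNIV::'k set) P \<partial>PiM UNIV (\<lambda>_. sphere_unif))"
  unfolding exp_det_def by (simp add: Ld_def Am_def det_def)

lemma sets_sphere2: "sets (sphere_unif \<Otimes>\<^sub>M sphere_unif) = sets (borel :: ('a::euclidean_space \<times> 'a) measure)"
  using sets_pair_measure_cong[OF sets_sphere sets_sphere] borel_prod by metis

lemma meas2: "f \<in> borel_measurable (borel :: ('a::euclidean_space \<times> 'a) measure) \<Longrightarrow>
   f \<in> borel_measurable ((sphere_unif::'a measure) \<Otimes>\<^sub>M sphere_unif)"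
  using measurable_cong_sets[OF sets_sphere2 refl, of borel] by (metis)

lemma moment_real:
  fixes u w :: "real^'n"
  shows "(\<integral>x. (u \<bullet> x) * (x \<bullet> w) \<partial>sphere_unif) = (u \<bullet> w) / real CARD('n)"
proof -
  have eq: "(u \<bullet> x) * (x \<bullet> w) = (\<Sum>a\<in>UNIV. \<Sum>b\<in>UNIV. (u $ a * w $ b) * ((x \<bullet> axis a 1) * (x \<bullet> axis b 1)))" for x :: "real^'n"
    unfolding cart_eq_inner_axis[symmetric] by (simp add: inner_vec_def sum_product mult_ac)
  have int: "integrable sphere_unif (\<lambda>x::real^'n. (x \<bullet> axis a 1) * (x \<bullet> axis b 1))" for a b
  proof (rule sphere_int_bounded[where B=1])
    fix x :: "real^'n" assume "norm x = 1"
    then show "norm ((x \<bullet> axis a 1) * (x \<bullet> axis b 1)) \<le> 1"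
      using Basis_le_norm[of "axis a (1::real)" x] Basis_le_norm[of "axis b (1::real)" x]
      by (simp add: abs_mult mult_le_one)
  qed simp
  have "(\<integral>x. (u \<bullet> x) * (x \<bullet> w) \<partial>sphere_unif) =
       (\<Sum>a\<in>UNIV. \<Sum>b\<in>UNIV. (u $ a * w $ b) * (\<integral>x. (x \<bullet> axis a 1) * (x \<bullet> axis b (1::real)) \<partial>(sphere_unif::(real^'n) measure)))"
    by (simp add: eq int)
  also have "\<dots> = (\<Sum>a\<in>UNIV. \<Sum>b\<in>UNIV. (u $ a * w $ b) * (if a = b then 1 / real CARD('n) else 0))"
    by (intro sum.cong refl) (simp add: moment_basis axis_eq_axis)
  also have "\<dots> = (\<Sum>a\<in>UNIV. u $ a * w $ a) / real CARD('n)"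
    by (simp add: sum_divide_distrib if_distrib cong: if_cong)
  also have "\<dots> = (u \<bullet> w) / real CARD('n)" by (simp add: inner_vec_def)
  finally show ?thesis .
qed

lemma sph_real: "sph (sphere_unif::(real^'n) measure) (\<lambda>x y. x \<bullet> y) (\<lambda>x. norm x = 1) (real CARD('n))"
proof (rule sph.intro)
  show "prob_space (sphere_unif::(real^'n) measure)" by (rule prob_sphere)
  show "AE x in (sphere_unif::(real^'n) measure). norm x = 1" by (rule AE_sphere)
  show "x \<bullet> x = 1" if "norm x = 1" for x :: "real^'n" using that by (simp add: power2_norm_eq_inner[symmetric])
  show "norm (x \<bullet> y) \<le> 1" if "norm x = 1" "norm y = 1" for x y :: "real^'n"
    using Cauchy_Schwarz_ineq2[of x y] that by simp
  show "(\<lambda>(x, y). x \<bullet> y) \<in> borel_measurable ((sphere_unif::(real^'n) measure) \<Otimes>\<^sub>M sphere_unif)"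
    by (rule meas2) (simp add: case_prod_beta' borel_measurable_continuous_onI continuous_intros)
  show "integrable sphere_unif (\<lambda>x. (u \<bullet> x) * (x \<bullet> w))" for u w :: "real^'n"
  proof (rule sphere_int_bounded[where B="norm u * norm w"])
    fix x :: "real^'n" assume x: "norm x = 1"
    have "\<bar>u \<bullet> x\<bar> * \<bar>x \<bullet> w\<bar> \<le> (norm u * norm x) * (norm x * norm w)"
      by (intro mult_mono Cauchy_Schwarz_ineq2) auto
    then show "norm ((u \<bullet> x) * (x \<bullet> w)) \<le> norm u * norm w" using x by (simp add: abs_mult)
  qed simp
  show "(\<integral>x. (u \<bullet> x) * (x \<bullet> w) \<partial>sphere_unif) = (u \<bullet> w) / of_real (real CARD('n))" for u w :: "real^'n"
    by (simp add: moment_real)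
  show "real CARD('n) > 0" by simp
qed



definition ipc :: "complex^'n \<Rightarrow> complex^'n \<Rightarrow> complex" where
  "ipc x y = (\<Sum>l\<in>UNIV. cnj (x $ l) * y $ l)"

lemma norm_sq_vec: "(norm (x::complex^'n))^2 = (\<Sum>l\<in>UNIV. (norm (x $ l))^2)"
  by (simp add: norm_vec_def L2_set_def sum_nonneg)

lemma ipc_self: "ipc x x = of_real ((norm x)^2)"
proof -
  have "ipc x x = (\<Sum>l\<in>UNIV. complex_of_real ((norm (x $ l))^2))"
    unfolding ipc_def by (intro sum.cong refl) (metis complex_norm_square mult.commute)
  also have "\<dots> = of_real ((norm x)^2)" by (simp add: norm_sq_vec)
  finally show ?thesis .
qed

lemma ipc_bound: "norm (ipc x y) \<le> norm x * norm y"
proof -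
  have "norm (ipc x y) \<le> (\<Sum>l\<in>UNIV. norm (cnj (x $ l) * y $ l))"
    unfolding ipc_def by (rule norm_sum)
  also have "\<dots> = (\<Sum>l\<in>UNIV. \<bar>norm (x $ l)\<bar> * \<bar>norm (y $ l)\<bar>)" by (simp add: norm_mult)
  also have "\<dots> \<le> L2_set (\<lambda>l. norm (x $ l)) UNIV * L2_set (\<lambda>l. norm (y $ l)) UNIV"
    by (rule L2_set_mult_ineq)
  also have "\<dots> = norm x * norm y" by (simp add: norm_vec_def)
  finally show ?thesis .
qed

lemma ipc_cont: "continuous_on UNIV (\<lambda>z::(complex^'n) \<times> (complex^'n). ipc (fst z) (snd z))"
  unfolding ipc_def by (intro continuous_intros)

lemma vec_complex: "x $ l = complex_of_real (x \<bullet> axis l 1) + \<i> * complex_of_real (x \<bullet> axis l \<i>)"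
  by (simp add: inner_axis complex_eq[symmetric])

lemma basis_moment_c:
  fixes a b :: complex
  assumes "a \<in> Basis" "b \<in> Basis"
  shows "(\<integral>x. (x \<bullet> axis l a) * (x \<bullet> axis m b) \<partial>(sphere_unif::(complex^'n) measure)) =
     (if l = m \<and> a = b then 1 / (2 * real CARD('n)) else 0)"
  using assms by (auto simp: moment_basis axis_eq_axis Basis_complex_def)

lemma int_basis_c:
  fixes a b :: complex
  assumes "a \<in> Basis" "b \<in> Basis"
  shows "integrable (sphere_unif::(complex^'n) measure) (\<lambda>x. (x \<bullet> axis l a) * (x \<bullet> axis m b))"
proof (rule sphere_int_bounded[where B=1])
  fix x :: "complex^'n" assume "norm x = 1"
  then show "norm ((x \<bullet> axis l a) * (x \<bullet> axis m b)) \<le> 1"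
    using Basis_le_norm[of "axis l a" x] Basis_le_norm[of "axis m b" x] assms
    by (simp add: abs_mult mult_le_one)
qed (simp add: borel_measurable_continuous_onI continuous_intros)

lemma moment_c_entry:
  "(\<integral>x. x $ l * cnj (x $ m) \<partial>(sphere_unif::(complex^'n) measure)) = (if l = m then 1 / of_nat CARD('n) else 0)"
proof -
  define R where "R l x = x \<bullet> axis l (1::complex)" for l and x :: "complex^'n"
  define I where "I l x = x \<bullet> axis l \<i>" for l and x :: "complex^'n"
  have B: "(1::complex) \<in> Basis" "\<i> \<in> Basis" by (auto simp: Basis_complex_def)
  have eq: "x $ l * cnj (x $ m) = complex_of_real (R l x * R m x + I l x * I m x) + \<i> * complex_of_real (I l x * R m x - R l x * I m x)" for x
    unfolding R_def I_def vec_complex[of x l] vec_complex[of x m]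
    by (simp add: algebra_simps complex_eq_iff)
  have iA: "integrable sphere_unif (\<lambda>x. R l x * R m x + I l x * I m x)"
    unfolding R_def I_def by (rule Bochner_Integration.integrable_add[OF int_basis_c[OF B(1) B(1)] int_basis_c[OF B(2) B(2)]])
  have iB: "integrable sphere_unif (\<lambda>x. I l x * R m x - R l x * I m x)"
    unfolding R_def I_def by (rule Bochner_Integration.integrable_diff[OF int_basis_c[OF B(2) B(1)] int_basis_c[OF B(1) B(2)]])
  have vA: "(\<integral>x. R l x * R m x + I l x * I m x \<partial>sphere_unif) = (if l = m then 1 / real CARD('n) else 0)"
    unfolding R_def I_def
    by (subst Bochner_Integration.integral_add[OF int_basis_c[OF B(1) B(1)] int_basis_c[OF B(2) B(2)]]) (simp add: basis_moment_c B)
  have vB: "(\<integral>x. I l x * R m x - R l x * I m x \<partial>sphere_unif) = 0"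
    unfolding R_def I_def
    by (subst Bochner_Integration.integral_diff[OF int_basis_c[OF B(2) B(1)] int_basis_c[OF B(1) B(2)]]) (simp add: basis_moment_c B)
  have "(\<integral>x. x $ l * cnj (x $ m) \<partial>(sphere_unif::(complex^'n) measure)) =
     (\<integral>x. complex_of_real (R l x * R m x + I l x * I m x) + \<i> * complex_of_real (I l x * R m x - R l x * I m x) \<partial>sphere_unif)"
    by (simp only: eq)
  also have "\<dots> = complex_of_real (\<integral>x. R l x * R m x + I l x * I m x \<partial>sphere_unif) +
       \<i> * complex_of_real (\<integral>x. I l x * R m x - R l x * I m x \<partial>sphere_unif)"
  proof -
    have j1: "integrable sphere_unif (\<lambda>x. complex_of_real (R l x * R m x + I l x * I m x))"
      by (rule integrable_of_real[OF iA])
    have j2: "integrable sphere_unif (\<lambda>x. \<i> * complex_of_real (I l x * R m x - R l x * I m x))"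
      by (rule integrable_mult_right) (rule integrable_of_real[OF iB])
    show ?thesis
      by (simp only: Bochner_Integration.integral_add[OF j1 j2] integral_mult_right_zero integral_complex_of_real)
  qed
  also have "\<dots> = (if l = m then 1 / of_nat CARD('n) else 0)" by (simp add: vA vB)
  finally show ?thesis .
qed



lemma moment_c:
  fixes u w :: "complex^'n"
  shows "(\<integral>x. ipc u x * ipc x w \<partial>sphere_unif) = ipc u w / of_real (real CARD('n))"
proof -
  have eq: "ipc u x * ipc x w = (\<Sum>l\<in>UNIV. \<Sum>m\<in>UNIV. (cnj (u $ l) * w $ m) * (x $ l * cnj (x $ m)))" for x :: "complex^'n"
    unfolding ipc_def sum_product by (simp add: mult_ac)
  have int: "integrable sphere_unif (\<lambda>x::complex^'n. x $ l * cnj (x $ m))" for l m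
  proof (rule sphere_int_bounded[where B=1])
    fix x :: "complex^'n" assume "norm x = 1"
    then show "norm (x $ l * cnj (x $ m)) \<le> 1"
      using Finite_Cartesian_Product.norm_nth_le[of x l] Finite_Cartesian_Product.norm_nth_le[of x m]
      by (simp add: norm_mult mult_le_one)
  qed (simp add: borel_measurable_continuous_onI continuous_intros)
  have "(\<integral>x. ipc u x * ipc x w \<partial>sphere_unif) =
      (\<Sum>l\<in>UNIV. \<Sum>m\<in>UNIV. (cnj (u $ l) * w $ m) * (\<integral>x. x $ l * cnj (x $ m) \<partial>(sphere_unif::(complex^'n) measure)))"
    by (simp add: eq int)
  also have "\<dots> = (\<Sum>l\<in>UNIV. \<Sum>m\<in>UNIV. (cnj (u $ l) * w $ m) * (if l = m then 1 / of_nat CARD('n) else 0))"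
    by (simp add: moment_c_entry)
  also have "\<dots> = (\<Sum>l\<in>UNIV. cnj (u $ l) * w $ l) / of_nat CARD('n)"
    by (simp add: sum_divide_distrib if_distrib cong: if_cong)
  finally show ?thesis by (simp add: ipc_def)
qed

lemma sph_complex: "sph (sphere_unif::(complex^'n) measure) ipc (\<lambda>x. norm x = 1) (real CARD('n))"
proof (rule sph.intro)
  show "prob_space (sphere_unif::(complex^'n) measure)" by (rule prob_sphere)
  show "AE x in (sphere_unif::(complex^'n) measure). norm x = 1" by (rule AE_sphere)
  show "ipc x x = 1" if "norm x = 1" for x :: "complex^'n" using that by (simp add: ipc_self)
  show "norm (ipc x y) \<le> 1" if "norm x = 1" "norm y = 1" for x y :: "complex^'n"
    using ipc_bound[of x y] that by simp
  show "(\<lambda>(x, y). ipc x y) \<in> borel_measurable ((sphere_unif::(complex^'n) measure) \<Otimes>\<^sub>M sphere_unif)"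
    by (rule meas2) (simp add: case_prod_beta' borel_measurable_continuous_onI ipc_cont)
  show "integrable sphere_unif (\<lambda>x. ipc u x * ipc x w)" for u w :: "complex^'n"
  proof (rule sphere_int_bounded[where B="norm u * norm w"])
    fix x :: "complex^'n" assume x: "norm x = 1"
    have "norm (ipc u x) * norm (ipc x w) \<le> (norm u * norm x) * (norm x * norm w)"
      by (intro mult_mono ipc_bound) auto
    then show "norm (ipc u x * ipc x w) \<le> norm u * norm w" using x by (simp add: norm_mult)
  next
    show "(\<lambda>x. ipc u x * ipc x w) \<in> borel_measurable borel"
      by (intro borel_measurable_continuous_onI) (unfold ipc_def, intro continuous_intros)
  qed
  show "(\<integral>x. ipc u x * ipc x w \<partial>sphere_unif) = ipc u w / of_real (real CARD('n))" for u w :: "complex^'n"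
    by (rule moment_c)
  show "real CARD('n) > 0" by simp
qed

lemma D_real_dd: "D_real c TYPE('n::finite) TYPE('k::finite) = dd (real CARD('n)) c CARD('k)"
  unfolding D_real_def exp_det_Ld
  using sph.main[OF sph_real, where c=c and K="UNIV::'k set"] by simp

lemma D_complex_dd: "D_complex c TYPE('n::finite) TYPE('k::finite) = complex_of_real (dd (real CARD('n)) c CARD('k))"
proof -
  have e: "(\<lambda>(x::complex^'n) y. \<Sum>l\<in>UNIV. cnj (x $ l) * y $ l) = ipc" by (simp add: fun_eq_iff ipc_def)
  show ?thesis
    unfolding D_complex_def e exp_det_Ld
    using sph.main[OF sph_complex, where c=c and K="UNIV::'k set"] by simp
qed

lemma dd_vals:
  assumes n: "n > 0"
  shows "dd n c 1 = 1 + c"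
    "dd n c 2 = (1 + c)^2 - c^2 * (1 / n)"
    "dd n c 3 = (1 + c)^3 - c^2 * (1 + c) * (3 / n) + c^3 * (2 / n^2)"
    "dd n c 4 = (1 + c)^4 - c^2 * (1 + c)^2 * (6 / n) + c^3 * (1 + c) * (8 / n^2)
        - c^4 * (6 / n^3 - 3 / n^2)"
    "dd n c 5 = (1 + c)^5 - c^2 * (1 + c)^3 * (10 / n) + c^3 * (1 + c)^2 * (20 / n^2)
        - c^4 * (1 + c) * (30 / n^3 - 15 / n^2) + c^5 * (24 / n^4 - 20 / n^3)"
  using n by (simp_all add: eval_nat_numeral field_simps)

theorem mainTheorem5:
  fixes c :: real and n :: real
  assumes "c > 0" and "n = real CARD('n::finite)"
  shows
   "D_real c TYPE('n) TYPE(1) = 1 + c \<and>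
    D_real c TYPE('n) TYPE(2) = (1 + c)^2 - c^2 * (1 / n) \<and>
    D_real c TYPE('n) TYPE(3) = (1 + c)^3 - c^2 * (1 + c) * (3 / n) + c^3 * (2 / n^2) \<and>
    D_real c TYPE('n) TYPE(4) = (1 + c)^4 - c^2 * (1 + c)^2 * (6 / n) + c^3 * (1 + c) * (8 / n^2)
        - c^4 * (6 / n^3 - 3 / n^2) \<and>
    D_real c TYPE('n) TYPE(5) = (1 + c)^5 - c^2 * (1 + c)^3 * (10 / n) + c^3 * (1 + c)^2 * (20 / n^2)
        - c^4 * (1 + c) * (30 / n^3 - 15 / n^2) + c^5 * (24 / n^4 - 20 / n^3) \<and>
    D_complex c TYPE('n) TYPE(1) = complex_of_real (1 + c) \<and>
    D_complex c TYPE('n) TYPE(2) = complex_of_real ((1 + c)^2 - c^2 * (1 / n)) \<and>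
    D_complex c TYPE('n) TYPE(3) = complex_of_real ((1 + c)^3 - c^2 * (1 + c) * (3 / n) + c^3 * (2 / n^2)) \<and>
    D_complex c TYPE('n) TYPE(4) = complex_of_real ((1 + c)^4 - c^2 * (1 + c)^2 * (6 / n)
        + c^3 * (1 + c) * (8 / n^2) - c^4 * (6 / n^3 - 3 / n^2)) \<and>
    D_complex c TYPE('n) TYPE(5) = complex_of_real ((1 + c)^5 - c^2 * (1 + c)^3 * (10 / n)
        + c^3 * (1 + c)^2 * (20 / n^2) - c^4 * (1 + c) * (30 / n^3 - 15 / n^2)
        + c^5 * (24 / n^4 - 20 / n^3))"
  proof -
  have n: "n > 0" using assms(2) by simp
  have R: "D_real c TYPE('n) TYPE('k::finite) = dd n c CARD('k)" for k
    using D_real_dd assms(2) by simp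
  have C: "D_complex c TYPE('n) TYPE('k::finite) = complex_of_real (dd n c CARD('k))" for k
    using D_complex_dd assms(2) by simp
  show ?thesis unfolding R C using dd_vals[OF n] by simp
qed

end
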